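(* Consider the drift-less setting with target $\rho_d=|\Psi\rangle\langle\Psi|$, and suppose $\rho_d$ is not DQLS. Suppose a QL Hamiltonian $H_c$ and QL noise operators $\{D_k\}$, in standard form with respect to $|\Psi\rangle$ ($D_k|\Psi\rangle=0$ for all $k$, $H_c|\Psi\rangle=h|\Psi\rangle$ with $h\in\mathbb R$), make $\rho_d$ GAS for $\mathcal L(H_c,\{D_k\})$. Then $\mathcal H_d=\mathrm{span}\{|\Psi\rangle\}$ is invariant under $H_c$, and there is no nonzero subspace $\mathcal K\subseteq\mathcal H_0$ with $\mathcal K\neq\mathcal H_d$ and $H_c\mathcal K\subseteq\mathcal K$. Moreover, $H_c'=H_c-hI$ is a QL Hamiltonian with $H_c'|\Psi\rangle=0$ and $\rho_d$ is GAS for $\mathcal L(H_c',\{D_k\})$.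
   Context: $\mathcal H=\bigotimes_{a=1}^n\mathcal H_a$ finite-dimensional with neighborhoods $\mathcal N_k\subsetneq\{1,\dots,n\}$. QL operator: $X_{\mathcal N_k}\otimes I_{\bar{\mathcal N}_k}$; QL Hamiltonian: sum of Hermitian QL operators. $\mathcal L(H,\{D_k\})(\rho)=-i[H,\rho]+\sum_k(D_k\rho D_k^\dagger-\frac12\{D_k^\dagger D_k,\rho\})$. GAS: $e^{\mathcal Lt}(\rho_0)\to\rho_d$ for every density operator $\rho_0$. $\rho_d$ is DQLS if there exist QL operators $D_k$ with $D_k|\Psi\rangle=0$ making $\rho_d$ GAS for $\mathcal L(0,\{D_k\})$. With $\rho_{\mathcal N_k}=\mathrm{Tr}_{\bar{\mathcal N}_k}\rho_d$, define $\mathcal H_0=\bigcap_k\mathrm{supp}(\rho_{\mathcal N_k}\otimes I_{\bar{\mathcal N}_k})$. *)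

theory Defs
  imports "HOL-Analysis.Analysis"
begin

text \<open>The global Hilbert space is complex^'c, where the finite basis index type 'c
is identified with the product of local basis sets via a coordinate map
coord :: 'c => ('s => 'l), 's being the (finite) set of sites and L a the basis
of the local space at site a.\<close>

definition tensor_coords :: "('c \<Rightarrow> 's \<Rightarrow> 'l) \<Rightarrow> ('s \<Rightarrow> 'l set) \<Rightarrow> bool" where
  "tensor_coords coord L \<longleftrightarrow> bij_betw coord UNIV (Pi UNIV L)"

definition mat_adj :: "complex^'c^'c \<Rightarrow> complex^'c^'c" where
  "mat_adj A = (\<chi> i j. cnj (A $ j $ i))"

definition hermitian :: "complex^'c^'c \<Rightarrow> bool" where
  "hermitian A \<longleftrightarrow> mat_adj A = A"

definition cmscale :: "complex \<Rightarrow> complex^'c^'c \<Rightarrow> complex^'c^'c" where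
  "cmscale c A = (\<chi> i j. c * A $ i $ j)"

definition cm_trace :: "complex^'c^'c \<Rightarrow> complex" where
  "cm_trace A = (\<Sum>i\<in>UNIV. A $ i $ i)"

definition qform :: "complex^'c^'c \<Rightarrow> complex^'c \<Rightarrow> complex" where
  "qform A v = (\<Sum>i\<in>UNIV. \<Sum>j\<in>UNIV. cnj (v $ i) * A $ i $ j * v $ j)"

definition density_op :: "complex^'c^'c \<Rightarrow> bool" where
  "density_op A \<longleftrightarrow> hermitian A \<and> (\<forall>v. 0 \<le> Re (qform A v)) \<and> cm_trace A = 1"

definition lindblad :: "complex^'c^'c \<Rightarrow> (complex^'c^'c) list \<Rightarrow> complex^'c^'c \<Rightarrow> complex^'c^'c" where
  "lindblad H Ds \<rho> =
     cmscale (- \<i>) (H ** \<rho> - \<rho> ** H) +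
     (\<Sum>D\<leftarrow>Ds. D ** \<rho> ** mat_adj D
               - cmscale (1/2) (mat_adj D ** D ** \<rho> + \<rho> ** (mat_adj D ** D)))"

definition evolve :: "(complex^'c^'c \<Rightarrow> complex^'c^'c) \<Rightarrow> real \<Rightarrow> complex^'c^'c \<Rightarrow> complex^'c^'c" where
  "evolve Lop t \<rho> = (\<Sum>n. (t ^ n / fact n) *\<^sub>R ((Lop ^^ n) \<rho>))"

definition GAS :: "(complex^'c^'c \<Rightarrow> complex^'c^'c) \<Rightarrow> complex^'c^'c \<Rightarrow> bool" where
  "GAS Lop \<rho>d \<longleftrightarrow> (\<forall>\<rho>0. density_op \<rho>0 \<longrightarrow> ((\<lambda>t. evolve Lop t \<rho>0) \<longlongrightarrow> \<rho>d) at_top)"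

definition proj :: "complex^'c \<Rightarrow> complex^'c^'c" where
  "proj \<Psi> = (\<chi> i j. \<Psi> $ i * cnj (\<Psi> $ j))"

definition unit_vec :: "complex^'c \<Rightarrow> bool" where
  "unit_vec \<Psi> \<longleftrightarrow> (\<Sum>i\<in>UNIV. (cmod (\<Psi> $ i))\<^sup>2) = 1"

definition agree_out :: "('c \<Rightarrow> 's \<Rightarrow> 'l) \<Rightarrow> 's set \<Rightarrow> 'c \<Rightarrow> 'c \<Rightarrow> bool" where
  "agree_out coord N c c' \<longleftrightarrow> (\<forall>a. a \<notin> N \<longrightarrow> coord c a = coord c' a)"

definition agree_on :: "('c \<Rightarrow> 's \<Rightarrow> 'l) \<Rightarrow> 's set \<Rightarrow> 'c \<Rightarrow> 'c \<Rightarrow> bool" where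
  "agree_on coord N c c' \<longleftrightarrow> (\<forall>a\<in>N. coord c a = coord c' a)"

text \<open>M = X_N \<otimes> I_{complement of N}.\<close>
definition is_local :: "('c \<Rightarrow> 's \<Rightarrow> 'l) \<Rightarrow> 's set \<Rightarrow> complex^'c^'c \<Rightarrow> bool" where
  "is_local coord N M \<longleftrightarrow> (\<exists>X. \<forall>c c'. M $ c $ c' =
      (if agree_out coord N c c' then X (restrict (coord c) N) (restrict (coord c') N) else 0))"

definition QL_op :: "('c \<Rightarrow> 's \<Rightarrow> 'l) \<Rightarrow> ('k \<Rightarrow> 's set) \<Rightarrow> complex^'c^'c \<Rightarrow> bool" where
  "QL_op coord Nb M \<longleftrightarrow> (\<exists>k. is_local coord (Nb k) M)"

definition QL_ham :: "('c \<Rightarrow> 's \<Rightarrow> 'l) \<Rightarrow> ('k \<Rightarrow> 's set) \<Rightarrow> complex^'c^'c \<Rightarrow> bool" where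
  "QL_ham coord Nb H \<longleftrightarrow>
     (\<exists>Hs. (\<forall>X\<in>set Hs. hermitian X \<and> QL_op coord Nb X) \<and> H = sum_list Hs)"

definition DQLS :: "('c \<Rightarrow> 's \<Rightarrow> 'l) \<Rightarrow> ('k \<Rightarrow> 's set) \<Rightarrow> complex^'c \<Rightarrow> bool" where
  "DQLS coord Nb \<Psi> \<longleftrightarrow>
     (\<exists>Ds. (\<forall>D\<in>set Ds. QL_op coord Nb D \<and> D *v \<Psi> = 0) \<and> GAS (lindblad 0 Ds) (proj \<Psi>))"

text \<open>rho_N \<otimes> I, where rho_N is the partial trace of rho over the complement of N.\<close>
definition ptr_ext :: "('c \<Rightarrow> 's \<Rightarrow> 'l) \<Rightarrow> 's set \<Rightarrow> complex^'c^'c \<Rightarrow> complex^'c^'c" where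
  "ptr_ext coord N \<rho> = (\<chi> c c'.
     if agree_out coord N c c'
     then (\<Sum>(e, e')\<in>{(e, e'). agree_on coord N e c \<and> agree_on coord N e' c' \<and> agree_out coord N e e'}.
             \<rho> $ e $ e')
     else 0)"

definition supp :: "complex^'c^'c \<Rightarrow> (complex^'c) set" where
  "supp A = range (\<lambda>v. A *v v)"

definition H0 :: "('c \<Rightarrow> 's \<Rightarrow> 'l) \<Rightarrow> ('k \<Rightarrow> 's set) \<Rightarrow> complex^'c^'c \<Rightarrow> (complex^'c) set" where
  "H0 coord Nb \<rho> = (\<Inter>k. supp (ptr_ext coord (Nb k) \<rho>))"

definition csubspace :: "(complex^'c) set \<Rightarrow> bool" where
  "csubspace K \<longleftrightarrow> 0 \<in> K \<and> (\<forall>x\<in>K. \<forall>y\<in>K. x + y \<in> K) \<and> (\<forall>c. \<forall>x\<in>K. c *s x \<in> K)"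

definition cspan1 :: "complex^'c \<Rightarrow> (complex^'c) set" where
  "cspan1 \<Psi> = {c *s \<Psi> | c. True}"

end

theory Submission
  imports Defs
begin


definition comb :: "('c \<Rightarrow> 's \<Rightarrow> 'l) \<Rightarrow> 's set \<Rightarrow> 'c \<Rightarrow> 'c \<Rightarrow> 'c" where
  "comb coord N c e = inv coord (\<lambda>a. if a \<in> N then coord c a else coord e a)"

lemma comb_coord:
  assumes "tensor_coords coord L"
  shows "coord (comb coord N c e) = (\<lambda>a. if a \<in> N then coord c a else coord e a)"
proof -
  have b: "bij_betw coord UNIV (Pi UNIV L)" using assms by (simp add: tensor_coords_def)
  have "coord c \<in> Pi UNIV L" "coord e \<in> Pi UNIV L" using bij_betw_apply[OF b] by auto
  hence "(\<lambda>a. if a \<in> N then coord c a else coord e a) \<in> Pi UNIV L" by (auto simp: Pi_iff)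
  hence "(\<lambda>a. if a \<in> N then coord c a else coord e a) \<in> range coord" using b by (simp add: bij_betw_def)
  thus ?thesis unfolding comb_def by (simp add: f_inv_into_f)
qed

lemma comb_iff:
  assumes "tensor_coords coord L"
  shows "(agree_on coord N x c \<and> agree_out coord N x e) \<longleftrightarrow> x = comb coord N c e"
proof -
  have b: "inj coord" using assms by (simp add: tensor_coords_def bij_betw_def)
  have "(agree_on coord N x c \<and> agree_out coord N x e) \<longleftrightarrow> coord x = coord (comb coord N c e)"
    unfolding comb_coord[OF assms] agree_on_def agree_out_def by (auto simp: fun_eq_iff)
  also have "\<dots> \<longleftrightarrow> x = comb coord N c e" using b by (simp add: inj_eq)
  finally show ?thesis .
qed

lemma comb_sum:
  fixes coord :: "'c::finite \<Rightarrow> 's \<Rightarrow> 'l"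
  assumes "tensor_coords coord L"
  shows "(\<Sum>x\<in>UNIV. if agree_on coord N x c \<and> agree_out coord N x e then F x else (0::'a::comm_monoid_add))
     = F (comb coord N c e)"
proof -
  have "(\<Sum>x\<in>UNIV. if agree_on coord N x c \<and> agree_out coord N x e then F x else (0::'a::comm_monoid_add))
     = (\<Sum>x\<in>UNIV. if x = comb coord N c e then F x else 0)"
    using comb_iff[OF assms] by presburger
  also have "\<dots> = F (comb coord N c e)" by simp
  finally show ?thesis .
qed

lemma restrict_eq_iff: "restrict (coord c) N = restrict (coord d) N \<longleftrightarrow> agree_on coord N c d"
  unfolding agree_on_def by (auto simp: restrict_def fun_eq_iff)

lemma ptr_kill:
  fixes D :: "complex^'c::finite^'c" and \<Psi> :: "complex^'c"
  assumes tc: "tensor_coords coord L" and loc: "is_local coord N D" and kill: "D *v \<Psi> = 0"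
  shows "D ** ptr_ext coord N (proj \<Psi>) = 0"
proof -
  obtain X where X: "\<And>c c'. D $ c $ c' = (if agree_out coord N c c' then X (restrict (coord c) N) (restrict (coord c') N) else 0)"
    using loc unfolding is_local_def by blast
  define r where "r c = restrict (coord c) N" for c
  define g where "g = comb coord N"
  note ao = agree_out_def and an = agree_on_def
  have gc: "coord (g c e) = (\<lambda>a. if a \<in> N then coord c a else coord e a)" for c e
    unfolding g_def by (rule comb_coord[OF tc])
  have S: "(\<Sum>(e, e')\<in>{(e, e'). agree_on coord N e c' \<and> agree_on coord N e' c'' \<and> agree_out coord N e e'}.
             proj \<Psi> $ e $ e') = (\<Sum>e\<in>{e. agree_on coord N e c'}. \<Psi> $ e * cnj (\<Psi> $ g c'' e))" for c' c''
  proof -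
    have "bij_betw (\<lambda>e. (e, g c'' e)) {e. agree_on coord N e c'}
       {(e, e'). agree_on coord N e c' \<and> agree_on coord N e' c'' \<and> agree_out coord N e e'}"
    proof (rule bij_betwI[where g=fst])
      show "(\<lambda>e. (e, g c'' e)) \<in> {e. agree_on coord N e c'} \<rightarrow>
         {(e, e'). agree_on coord N e c' \<and> agree_on coord N e' c'' \<and> agree_out coord N e e'}"
        using gc by (auto simp: an ao)
      show "fst \<in> {(e, e'). agree_on coord N e c' \<and> agree_on coord N e' c'' \<and> agree_out coord N e e'} \<rightarrow> {e. agree_on coord N e c'}"
        by auto
      fix p assume "p \<in> {(e, e'). agree_on coord N e c' \<and> agree_on coord N e' c'' \<and> agree_out coord N e e'}"
      then obtain e e' where p: "p = (e,e')" "agree_on coord N e c'" "agree_on coord N e' c''" "agree_out coord N e e'" by auto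
      hence "agree_out coord N e' e" by (auto simp: ao)
      hence "e' = g c'' e" using p comb_iff[OF tc] unfolding g_def by blast
      thus "(fst p, g c'' (fst p)) = p" using p by simp
    qed auto
    hence "(\<Sum>(e, e')\<in>{(e, e'). agree_on coord N e c' \<and> agree_on coord N e' c'' \<and> agree_out coord N e e'}.
             proj \<Psi> $ e $ e') = (\<Sum>e\<in>{e. agree_on coord N e c'}. (\<lambda>(e,e'). proj \<Psi> $ e $ e') (e, g c'' e))"
      by (rule sum.reindex_bij_betw[symmetric])
    thus ?thesis by (simp add: proj_def)
  qed
  have key: "(\<Sum>e\<in>UNIV. X (r c) (r e) * \<Psi> $ e * cnj (\<Psi> $ g c'' e)) = 0" for c c''
  proof -
    have gg: "g c'' (g c e) = g c'' e" for e
    proof -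
      have "coord (g c'' (g c e)) = coord (g c'' e)" unfolding gc by (auto simp: fun_eq_iff)
      thus ?thesis using tc by (auto simp: tensor_coords_def bij_betw_def inj_eq)
    qed
    have rg: "r (g c e) = r c" for e unfolding r_def restrict_def gc by (auto simp: fun_eq_iff)
    have z: "(D *v \<Psi>) $ d = 0" for d by (simp add: kill)
    have "0 = (\<Sum>d\<in>UNIV. if agree_on coord N d c then cnj (\<Psi> $ g c'' d) * (D *v \<Psi>) $ d else 0)"
      by (rule sym, rule sum.neutral, rule ballI) (simp only: z mult_zero_right if_cancel)
    also have "\<dots> = (\<Sum>d\<in>UNIV. \<Sum>e\<in>UNIV. if agree_on coord N d c \<and> agree_out coord N d e then
        X (r c) (r e) * \<Psi> $ e * cnj (\<Psi> $ g c'' e) else 0)"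
    proof (rule sum.cong[OF refl])
      fix d
      show "(if agree_on coord N d c then cnj (\<Psi> $ g c'' d) * (D *v \<Psi>) $ d else 0) =
         (\<Sum>e\<in>UNIV. if agree_on coord N d c \<and> agree_out coord N d e then X (r c) (r e) * \<Psi> $ e * cnj (\<Psi> $ g c'' e) else 0)"
      proof (cases "agree_on coord N d c")
        case True
        have rd: "r d = r c" using True unfolding r_def by (simp add: restrict_eq_iff)
        have ge: "agree_out coord N d e \<Longrightarrow> g c'' e = g c'' d" for e
        proof -
          assume "agree_out coord N d e"
          hence "coord (g c'' e) = coord (g c'' d)" unfolding gc by (auto simp: fun_eq_iff ao)
          thus ?thesis using tc by (auto simp: tensor_coords_def bij_betw_def inj_eq)
        qed
        show ?thesis using True
          by (auto simp: matrix_vector_mult_def X sum_distrib_left rd r_def[symmetric] ge intro!: sum.cong)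
      qed simp
    qed
    also have "\<dots> = (\<Sum>e\<in>UNIV. \<Sum>d\<in>UNIV. if agree_on coord N d c \<and> agree_out coord N d e then
        X (r c) (r e) * \<Psi> $ e * cnj (\<Psi> $ g c'' e) else 0)"
      by (rule sum.swap)
    also have "\<dots> = (\<Sum>e\<in>UNIV. X (r c) (r e) * \<Psi> $ e * cnj (\<Psi> $ g c'' e))"
      by (simp add: comb_sum[OF tc])
    finally show ?thesis by simp
  qed
  show ?thesis
  proof (subst vec_eq_iff, intro allI, subst vec_eq_iff, intro allI)
    fix c c''
    have "(D ** ptr_ext coord N (proj \<Psi>)) $ c $ c'' =
      (\<Sum>c'\<in>UNIV. D $ c $ c' * (if agree_out coord N c' c'' then
         (\<Sum>e\<in>{e. agree_on coord N e c'}. \<Psi> $ e * cnj (\<Psi> $ g c'' e)) else 0))"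
      by (simp only: matrix_matrix_mult_def ptr_ext_def vec_lambda_beta S)
    also have "\<dots> = 0"
    proof (cases "agree_out coord N c c''")
      case False
      show ?thesis by (rule sum.neutral) (use False in \<open>auto simp: X ao\<close>)
    next
      case True
      have "(\<Sum>c'\<in>UNIV. D $ c $ c' * (if agree_out coord N c' c'' then
         (\<Sum>e\<in>{e. agree_on coord N e c'}. \<Psi> $ e * cnj (\<Psi> $ g c'' e)) else 0))
        = (\<Sum>c'\<in>UNIV. \<Sum>e\<in>UNIV. if agree_on coord N c' e \<and> agree_out coord N c' c then
             X (r c) (r e) * \<Psi> $ e * cnj (\<Psi> $ g c'' e) else 0)"
      proof (rule sum.cong[OF refl])
        fix c'
        show "D $ c $ c' * (if agree_out coord N c' c'' then
         (\<Sum>e\<in>{e. agree_on coord N e c'}. \<Psi> $ e * cnj (\<Psi> $ g c'' e)) else 0) =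
          (\<Sum>e\<in>UNIV. if agree_on coord N c' e \<and> agree_out coord N c' c then
             X (r c) (r e) * \<Psi> $ e * cnj (\<Psi> $ g c'' e) else 0)"
        proof (cases "agree_out coord N c' c")
          case T2: True
          hence o: "agree_out coord N c' c''" "agree_out coord N c c'" using True by (auto simp: ao)
          have "(\<Sum>e\<in>{e. agree_on coord N e c'}. \<Psi> $ e * cnj (\<Psi> $ g c'' e)) =
             (\<Sum>e\<in>UNIV. if agree_on coord N c' e then \<Psi> $ e * cnj (\<Psi> $ g c'' e) else 0)"
            by (simp add: sum.If_cases an eq_commute conj_commute Int_def)
          moreover have "agree_on coord N c' e \<Longrightarrow> r e = r c'" for e
            unfolding r_def by (simp add: restrict_eq_iff an)
          ultimately show ?thesis using T2 o
            by (auto simp: X r_def[symmetric] sum_distrib_left mult.assoc intro!: sum.cong)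
        next
          case F2: False
          hence "\<not> agree_out coord N c c'" by (auto simp: ao)
          thus ?thesis using F2 by (simp add: X)
        qed
      qed
      also have "\<dots> = (\<Sum>e\<in>UNIV. \<Sum>c'\<in>UNIV. if agree_on coord N c' e \<and> agree_out coord N c' c then
             X (r c) (r e) * \<Psi> $ e * cnj (\<Psi> $ g c'' e) else 0)" by (rule sum.swap)
      also have "\<dots> = (\<Sum>e\<in>UNIV. X (r c) (r e) * \<Psi> $ e * cnj (\<Psi> $ g c'' e))"
        by (simp add: comb_sum[OF tc])
      also have "\<dots> = 0" by (rule key)
      finally show ?thesis .
    qed
    finally show "(D ** ptr_ext coord N (proj \<Psi>)) $ c $ c'' = 0 $ c $ c''" by simp
  qed
qed



lemma mm_add_r: "((A::complex^'n::finite^'m) + B) ** (C::complex^'p^'n) = A ** C + B ** C"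
  by (simp add: vec_eq_iff matrix_matrix_mult_def sum.distrib distrib_right)
lemma mm_diff_r: "((A::complex^'n::finite^'m) - B) ** (C::complex^'p^'n) = A ** C - B ** C"
  by (simp add: vec_eq_iff matrix_matrix_mult_def sum_subtractf left_diff_distrib)
lemma mm_diff_l: "(A::complex^'n::finite^'m) ** ((B::complex^'p^'n) - C) = A ** B - A ** C"
  by (simp add: vec_eq_iff matrix_matrix_mult_def sum_subtractf right_diff_distrib)
lemma mm_scaleR_r: "(r *\<^sub>R (A::complex^'n::finite^'m)) ** (C::complex^'p^'n) = r *\<^sub>R (A ** C)"
  by (simp add: scalar_matrix_assoc)
lemma mm_scaleR_l: "(A::complex^'n::finite^'m) ** (r *\<^sub>R (C::complex^'p^'n)) = r *\<^sub>R (A ** C)"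
  by (simp add: matrix_matrix_mult_def vec_eq_iff scaleR_sum_right)
lemma cms_add: "cmscale c (A + B) = cmscale c A + cmscale c B"
  by (simp add: vec_eq_iff cmscale_def distrib_left)
lemma cms_diff: "cmscale c (A - B) = cmscale c A - cmscale c B"
  by (simp add: vec_eq_iff cmscale_def right_diff_distrib)
lemma cms_scaleR: "cmscale c (r *\<^sub>R A) = r *\<^sub>R cmscale c A"
  by (simp add: vec_eq_iff cmscale_def scaleR_conv_of_real mult_ac)
lemma cms_mm_l: "cmscale c (A::complex^'n::finite^'n) ** (B::complex^'n^'n) = cmscale c (A ** B)"
  by (simp add: vec_eq_iff cmscale_def matrix_matrix_mult_def sum_distrib_left mult_ac)
lemma cms_mm_r: "(A::complex^'n::finite^'n) ** cmscale c (B::complex^'n^'n) = cmscale c (A ** B)"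
  by (simp add: vec_eq_iff cmscale_def matrix_matrix_mult_def sum_distrib_left mult_ac)
lemma cms_mv: "cmscale c (A::complex^'n::finite^'n) *v v = c *s (A *v v)"
  by (simp add: vec_eq_iff cmscale_def matrix_vector_mult_def sum_distrib_left mult_ac)
lemma mv_smult: "(A::complex^'n::finite^'m) *v (c *s v) = c *s (A *v v)"
  by (simp add: vec_eq_iff matrix_vector_mult_def sum_distrib_left mult_ac)
lemma mv_scaleR: "(r *\<^sub>R (A::complex^'n::finite^'m)) *v v = r *\<^sub>R (A *v v)"
  by (simp add: vec_eq_iff matrix_vector_mult_def scaleR_sum_right)
lemma scaleR_smult: "r *\<^sub>R (v::complex^'n) = (of_real r :: complex) *s v"
  by (simp add: vec_eq_iff of_real_def)

definition diss :: "complex^'c^'c \<Rightarrow> complex^'c^'c \<Rightarrow> complex^'c^'c" where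
  "diss D \<rho> = D ** \<rho> ** mat_adj D - cmscale (1/2) (mat_adj D ** D ** \<rho> + \<rho> ** (mat_adj D ** D))"

lemma lindblad_alt: "lindblad H Ds \<rho> = cmscale (- \<i>) (H ** \<rho> - \<rho> ** H) + (\<Sum>D\<leftarrow>Ds. diss D \<rho>)"
  unfolding lindblad_def diss_def by simp

lemma diss_add: "diss (D::complex^'c::finite^'c) (x + y) = diss D x + diss D y"
  unfolding diss_def by (simp add: matrix_add_ldistrib mm_add_r cms_add algebra_simps)
lemma diss_scaleR: "diss (D::complex^'c::finite^'c) (r *\<^sub>R x) = r *\<^sub>R diss D x"
  unfolding diss_def by (simp add: mm_scaleR_l mm_scaleR_r cms_scaleR cms_add scaleR_diff_right scaleR_add_right)

lemma sum_diss_add: "(\<Sum>D\<leftarrow>Ds. diss (D::complex^'c::finite^'c) (x + y)) = (\<Sum>D\<leftarrow>Ds. diss D x) + (\<Sum>D\<leftarrow>Ds. diss D y)"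
  by (induction Ds) (simp_all add: diss_add algebra_simps)
lemma sum_diss_scaleR: "(\<Sum>D\<leftarrow>Ds. diss (D::complex^'c::finite^'c) (r *\<^sub>R x)) = r *\<^sub>R (\<Sum>D\<leftarrow>Ds. diss D x)"
  by (induction Ds) (simp_all add: diss_scaleR scaleR_add_right)

lemma lindblad_linear: "linear (lindblad (H::complex^'c::finite^'c) Ds)"
proof (rule linearI)
  fix x y :: "complex^'c^'c"
  show "lindblad H Ds (x + y) = lindblad H Ds x + lindblad H Ds y"
    unfolding lindblad_alt sum_diss_add
    by (simp add: matrix_add_ldistrib mm_add_r cms_add cms_diff algebra_simps)
next
  fix r :: real and x :: "complex^'c^'c"
  show "lindblad H Ds (r *\<^sub>R x) = r *\<^sub>R lindblad H Ds x"
    unfolding lindblad_alt sum_diss_scaleR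
    by (simp add: mm_scaleR_l mm_scaleR_r cms_scaleR cms_diff scaleR_diff_right scaleR_add_right
         flip: scaleR_diff_right)
qed

lemma evolve_in:
  fixes f :: "complex^'c::finite^'c \<Rightarrow> complex^'c^'c"
  assumes V: "subspace V" and lin: "linear f" and inv: "\<forall>x\<in>V. f x \<in> V" and x: "x \<in> V"
  shows "evolve f t x \<in> V"
proof -
  have pw: "(f ^^ n) x \<in> V" for n by (induction n) (use x inv in auto)
  have "bounded_linear f" using lin by (simp add: linear_conv_bounded_linear)
  then obtain K where K: "K > 0" "\<And>y. norm (f y) \<le> norm y * K"
    using bounded_linear.pos_bounded by blast
  have nb: "norm ((f ^^ n) x) \<le> K ^ n * norm x" for n
  proof (induction n)
    case (Suc n)
    have "norm ((f ^^ Suc n) x) \<le> norm ((f ^^ n) x) * K" using K(2) by simp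
    also have "\<dots> \<le> K ^ n * norm x * K" using Suc K(1) by (simp add: mult_right_mono)
    finally show ?case by (simp add: mult_ac)
  qed simp
  define a where "a n = (t ^ n / fact n) *\<^sub>R ((f ^^ n) x)" for n
  have sg: "summable (\<lambda>n. (\<bar>t\<bar> * K) ^ n / fact n * norm x)"
    using summable_exp[of "\<bar>t\<bar> * K"] by (intro summable_mult2) (simp add: divide_inverse mult_ac)
  have "summable a"
  proof (rule summable_comparison_test'[OF sg])
    fix n :: nat
    have "norm (a n) = \<bar>t\<bar> ^ n / fact n * norm ((f ^^ n) x)"
      by (simp add: a_def power_abs)
    also have "\<dots> \<le> \<bar>t\<bar> ^ n / fact n * (K ^ n * norm x)"
      by (rule mult_left_mono[OF nb]) simp
    also have "\<dots> = (\<bar>t\<bar> * K) ^ n / fact n * norm x" by (simp add: power_mult_distrib)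
    finally show "norm (a n) \<le> (\<bar>t\<bar> * K) ^ n / fact n * norm x" .
  qed
  hence lim: "(\<lambda>n. \<Sum>i<n. a i) \<longlonglongrightarrow> suminf a" by (rule summable_LIMSEQ)
  have "suminf a \<in> V"
  proof (rule Lim_in_closed_set[OF closed_subspace[OF V] _ _ lim])
    show "\<forall>\<^sub>F n in sequentially. (\<Sum>i<n. a i) \<in> V"
      using V pw by (auto simp: a_def intro!: always_eventually subspace_sum subspace_scale)
  qed simp
  thus ?thesis unfolding evolve_def a_def .
qed



definition ip :: "complex^'c::finite \<Rightarrow> complex^'c \<Rightarrow> complex" where
  "ip x y = (\<Sum>j\<in>UNIV. cnj (x$j) * y$j)"

lemma proj_mv: "proj \<phi> *v v = ip \<phi> v *s \<phi>"
  by (simp add: vec_eq_iff proj_def matrix_vector_mult_def ip_def sum_distrib_left mult_ac)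

lemma unit_ip: assumes "unit_vec \<Psi>" shows "ip \<Psi> \<Psi> = 1"
proof -
  have "ip \<Psi> \<Psi> = (\<Sum>j\<in>UNIV. complex_of_real ((cmod (\<Psi>$j))\<^sup>2))"
    unfolding ip_def by (intro sum.cong refl) (metis complex_norm_square mult.commute)
  also have "\<dots> = complex_of_real (\<Sum>j\<in>UNIV. (cmod (\<Psi>$j))\<^sup>2)" by (simp only: of_real_sum)
  also have "\<dots> = 1" using assms by (simp add: unit_vec_def)
  finally show ?thesis .
qed

lemma density_proj: assumes "unit_vec \<phi>" shows "density_op (proj \<phi>)"
proof -
  have h: "hermitian (proj \<phi>)" by (simp add: hermitian_def mat_adj_def proj_def vec_eq_iff)
  have q: "qform (proj \<phi>) v = cnj (ip \<phi> v) * ip \<phi> v" for v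
    by (simp add: qform_def proj_def ip_def sum_product cnj_sum mult_ac)
  have "Re (qform (proj \<phi>) v) \<ge> 0" for v
    unfolding q by (simp add: complex_norm_square[symmetric] mult.commute[of "cnj _"])
  moreover have "cm_trace (proj \<phi>) = 1"
    using unit_ip[OF assms] by (simp add: cm_trace_def proj_def ip_def mult.commute)
  ultimately show ?thesis using h by (simp add: density_op_def)
qed

lemma normalize_unit:
  fixes u :: "complex^'c::finite"
  assumes "u \<noteq> 0"
  shows "unit_vec ((of_real (1 / norm u) :: complex) *s u)"
proof -
  have n2: "(norm u)\<^sup>2 = (\<Sum>i\<in>UNIV. (cmod (u$i))\<^sup>2)"
    by (simp add: norm_vec_def L2_set_def sum_nonneg)
  have "(\<Sum>i\<in>UNIV. (cmod (((of_real (1 / norm u) :: complex) *s u) $ i))\<^sup>2)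
      = (\<Sum>i\<in>UNIV. (1 / norm u)\<^sup>2 * (cmod (u$i))\<^sup>2)"
    by (simp add: norm_divide power_divide)
  also have "\<dots> = (1 / norm u)\<^sup>2 * (norm u)\<^sup>2" by (simp add: n2 sum_distrib_left)
  also have "\<dots> = 1" using assms by (simp add: power_divide)
  finally show ?thesis by (simp add: unit_vec_def)
qed

lemma csub_diff: "csubspace K \<Longrightarrow> x \<in> K \<Longrightarrow> y \<in> K \<Longrightarrow> x - y \<in> K"
proof -
  assume K: "csubspace K" "x \<in> K" "y \<in> K"
  have e: "x - y = x + (-1::complex) *s y" by (simp add: vec_eq_iff)
  have "x + (-1::complex) *s y \<in> K" using K unfolding csubspace_def by blast
  with e show ?thesis by metis
qed

lemma csub_list: "csubspace K \<Longrightarrow> (\<forall>D\<in>set Ds. F D \<in> K) \<Longrightarrow> (\<Sum>D\<leftarrow>Ds. F D) \<in> K"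
  by (induction Ds) (auto simp: csubspace_def)

lemma sum_list_mv: "(\<Sum>D\<leftarrow>Ds. F D) *v (v::complex^'c::finite) = (\<Sum>D\<leftarrow>Ds. F D *v v)"
  by (induction Ds) (simp_all add: matrix_vector_mult_add_rdistrib)

lemma diss_mv: "diss D \<rho> *v v = D *v (\<rho> *v (mat_adj D *v v))
     - (1/2) *s (mat_adj D *v (D *v (\<rho> *v v)) + \<rho> *v (mat_adj D *v (D *v v)))"
  by (simp add: diss_def matrix_vector_mult_diff_rdistrib cms_mv matrix_vector_mult_add_rdistrib
     matrix_vector_mul_assoc matrix_mul_assoc)

lemma lind_mv: "lindblad H Ds \<rho> *v v = (- \<i>) *s (H *v (\<rho> *v v) - \<rho> *v (H *v v)) + (\<Sum>D\<leftarrow>Ds. diss D \<rho> *v v)"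
  by (simp add: lindblad_alt matrix_vector_mult_diff_rdistrib cms_mv matrix_vector_mult_add_rdistrib
     matrix_vector_mul_assoc sum_list_mv)

lemma core:
  fixes Hc :: "complex^'c::finite^'c"
  assumes K: "csubspace K" and Hinv: "\<forall>v\<in>K. Hc *v v \<in> K"
    and Dk: "\<forall>D\<in>set Ds. \<forall>v\<in>K. D *v v = 0"
    and phi: "\<phi> \<in> K" "unit_vec \<phi>" and Psi: "unit_vec \<Psi>" "\<Psi> \<notin> K"
    and gas: "GAS (lindblad Hc Ds) (proj \<Psi>)"
  shows False
proof -
  define V where "V = {\<rho> :: complex^'c^'c. \<forall>v. \<rho> *v v \<in> K}"
  have Kadd: "x \<in> K \<Longrightarrow> y \<in> K \<Longrightarrow> x + y \<in> K" for x y using K by (simp add: csubspace_def)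
  have Ksm: "x \<in> K \<Longrightarrow> c *s x \<in> K" for x c using K by (simp add: csubspace_def)
  have K0: "0 \<in> K" using K by (simp add: csubspace_def)
  have sV: "subspace V"
    unfolding subspace_def V_def
    using K0 Kadd Ksm by (simp add: matrix_vector_mult_add_rdistrib mv_scaleR scaleR_smult)
  have invV: "\<forall>\<rho>\<in>V. lindblad Hc Ds \<rho> \<in> V"
  proof
    fix \<rho> assume r: "\<rho> \<in> V"
    hence rK: "\<rho> *v w \<in> K" for w by (simp add: V_def)
    have "lindblad Hc Ds \<rho> *v v \<in> K" for v
      unfolding lind_mv
    proof (rule Kadd)
      show "(- \<i>) *s (Hc *v (\<rho> *v v) - \<rho> *v (Hc *v v)) \<in> K"
        using rK Hinv by (intro Ksm csub_diff[OF K]) auto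
      show "(\<Sum>D\<leftarrow>Ds. diss D \<rho> *v v) \<in> K"
      proof (rule csub_list[OF K], rule ballI)
        fix D assume D: "D \<in> set Ds"
        have z1: "D *v (\<rho> *v (mat_adj D *v v)) = 0" using D Dk rK by blast
        have z2: "D *v (\<rho> *v v) = 0" using D Dk rK by blast
        show "diss D \<rho> *v v \<in> K" unfolding diss_mv z1 z2
          using rK K0 by (intro csub_diff[OF K] Ksm Kadd) auto
      qed
    qed
    thus "lindblad Hc Ds \<rho> \<in> V" by (simp add: V_def)
  qed
  have pV: "proj \<phi> \<in> V" using phi Ksm by (simp add: V_def proj_mv)
  have ev: "evolve (lindblad Hc Ds) t (proj \<phi>) \<in> V" for t
    by (rule evolve_in[OF sV lindblad_linear invV pV])
  have lim: "((\<lambda>t. evolve (lindblad Hc Ds) t (proj \<phi>)) \<longlongrightarrow> proj \<Psi>) at_top"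
    using gas density_proj[OF phi(2)] by (simp add: GAS_def)
  have "proj \<Psi> \<in> V"
    by (rule Lim_in_closed_set[OF closed_subspace[OF sV] _ _ lim]) (simp_all add: ev)
  hence "proj \<Psi> *v \<Psi> \<in> K" by (simp add: V_def)
  thus False using Psi by (simp add: proj_mv unit_ip)
qed



lemma mat_adj_add: "mat_adj (A + B) = mat_adj A + mat_adj B"
  by (simp add: mat_adj_def vec_eq_iff)
lemma mat_adj_0: "mat_adj 0 = 0"
  by (simp add: mat_adj_def vec_eq_iff)
lemma herm_sum_list: "\<forall>X\<in>set Hs. hermitian X \<Longrightarrow> hermitian (sum_list Hs)"
  by (induction Hs) (auto simp: hermitian_def mat_adj_add mat_adj_0)

lemma herm_entry: "hermitian A \<Longrightarrow> cnj (A $ j $ i) = A $ i $ j"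
  unfolding hermitian_def mat_adj_def by (metis vec_lambda_beta)

lemma ip_herm:
  fixes A :: "complex^'c::finite^'c"
  assumes "hermitian A" shows "ip x (A *v y) = ip (A *v x) y"
proof -
  have "ip x (A *v y) = (\<Sum>j\<in>UNIV. \<Sum>k\<in>UNIV. cnj (x$j) * A$j$k * y$k)"
    by (simp add: ip_def matrix_vector_mult_def sum_distrib_left mult_ac)
  also have "\<dots> = (\<Sum>k\<in>UNIV. \<Sum>j\<in>UNIV. cnj (x$j) * A$j$k * y$k)" by (rule sum.swap)
  also have "\<dots> = ip (A *v x) y"
    by (simp add: ip_def matrix_vector_mult_def sum_distrib_right sum_distrib_left cnj_sum herm_entry[OF assms] mult_ac)
  finally show ?thesis .
qed

lemma ip_diff: "ip x (y - z) = ip x y - ip x z"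
  by (simp add: ip_def sum_subtractf right_diff_distrib)
lemma ip_add: "ip x (y + z) = ip x y + ip x z"
  by (simp add: ip_def sum.distrib distrib_left)
lemma ip_smult: "ip x (c *s y) = c * ip x y"
  by (simp add: ip_def sum_distrib_left mult_ac)
lemma ip_smult_l: "ip (c *s x) y = cnj c * ip x y"
  by (simp add: ip_def sum_distrib_left mult_ac)
lemma ip_0: "ip x 0 = 0"
  by (simp add: ip_def)

lemma kill_H0:
  fixes D :: "complex^'c::finite^'c"
  assumes tc: "tensor_coords coord L" and ql: "QL_op coord Nb D" and k: "D *v \<Psi> = 0"
    and v: "v \<in> H0 coord Nb (proj \<Psi>)"
  shows "D *v v = 0"
proof -
  obtain k where loc: "is_local coord (Nb k) D" using ql by (auto simp: QL_op_def)
  have "v \<in> supp (ptr_ext coord (Nb k) (proj \<Psi>))" using v by (auto simp: H0_def)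
  then obtain w where w: "v = ptr_ext coord (Nb k) (proj \<Psi>) *v w" by (auto simp: supp_def)
  have "D *v v = (D ** ptr_ext coord (Nb k) (proj \<Psi>)) *v w" by (simp add: w matrix_vector_mul_assoc)
  also have "\<dots> = 0" using ptr_kill[OF tc loc k] by simp
  finally show ?thesis .
qed

lemma ident_local:
  fixes coord :: "'c::finite \<Rightarrow> 's \<Rightarrow> 'l"
  assumes tc: "tensor_coords coord L"
  shows "is_local coord N (cmscale a (mat 1))"
  unfolding is_local_def
proof (intro exI allI)
  fix c c' :: 'c
  have inj: "inj coord" using tc by (simp add: tensor_coords_def bij_betw_def)
  show "cmscale a (mat 1) $ c $ c' = (if agree_out coord N c c'
      then (\<lambda>r r'. if r = r' then a else 0) (restrict (coord c) N) (restrict (coord c') N) else 0)"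
  proof (cases "c = c'")
    case True thus ?thesis by (simp add: cmscale_def mat_def agree_out_def)
  next
    case False
    have "\<not> (agree_out coord N c c' \<and> restrict (coord c) N = restrict (coord c') N)"
    proof
      assume a: "agree_out coord N c c' \<and> restrict (coord c) N = restrict (coord c') N"
      have "coord c = coord c'"
      proof
        fix s show "coord c s = coord c' s"
        proof (cases "s \<in> N")
          case True thus ?thesis using a by (metis restrict_apply')
        qed (use a in \<open>auto simp: agree_out_def\<close>)
      qed
      thus False using inj False by (simp add: inj_eq)
    qed
    thus ?thesis using False by (auto simp: cmscale_def mat_def)
  qed
qed



theorem proposition3:
  fixes coord :: "'c::finite \<Rightarrow> 's::finite \<Rightarrow> 'l"
    and L :: "'s \<Rightarrow> 'l set"
    and Nb :: "'k::finite \<Rightarrow> 's set"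
    and \<Psi> :: "complex^'c"
    and Hc :: "complex^'c^'c"
    and Ds :: "(complex^'c^'c) list"
    and h :: real
  assumes tensor: "tensor_coords coord L"
    and proper: "\<forall>k. Nb k \<subset> UNIV"
    and unit: "unit_vec \<Psi>"
    and notDQLS: "\<not> DQLS coord Nb \<Psi>"
    and Hc_QL: "QL_ham coord Nb Hc"
    and Ds_QL: "\<forall>D\<in>set Ds. QL_op coord Nb D"
    and Ds_kill: "\<forall>D\<in>set Ds. D *v \<Psi> = 0"
    and Hc_eig: "Hc *v \<Psi> = of_real h *s \<Psi>"
    and gas: "GAS (lindblad Hc Ds) (proj \<Psi>)"
  shows "(\<forall>v\<in>cspan1 \<Psi>. Hc *v v \<in> cspan1 \<Psi>)
    \<and> \<not> (\<exists>K. csubspace K \<and> K \<noteq> {0} \<and> K \<subseteq> H0 coord Nb (proj \<Psi>)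
              \<and> K \<noteq> cspan1 \<Psi> \<and> (\<forall>v\<in>K. Hc *v v \<in> K))
    \<and> (let Hc' = Hc - cmscale (of_real h) (mat 1) in
         QL_ham coord Nb Hc' \<and> Hc' *v \<Psi> = 0 \<and> GAS (lindblad Hc' Ds) (proj \<Psi>))"
proof (intro conjI)
  obtain Hs where Hs: "\<forall>X\<in>set Hs. hermitian X \<and> QL_op coord Nb X" "Hc = sum_list Hs"
    using Hc_QL by (auto simp: QL_ham_def)
  have herm: "hermitian Hc" using Hs herm_sum_list by auto
  show "\<forall>v\<in>cspan1 \<Psi>. Hc *v v \<in> cspan1 \<Psi>"
  proof
    fix v assume "v \<in> cspan1 \<Psi>"
    then obtain c where "v = c *s \<Psi>" by (auto simp: cspan1_def)
    hence "Hc *v v = (c * of_real h) *s \<Psi>" by (simp add: mv_smult Hc_eig vector_smult_assoc)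
    thus "Hc *v v \<in> cspan1 \<Psi>" by (auto simp: cspan1_def)
  qed
  show "\<not> (\<exists>K. csubspace K \<and> K \<noteq> {0} \<and> K \<subseteq> H0 coord Nb (proj \<Psi>)
              \<and> K \<noteq> cspan1 \<Psi> \<and> (\<forall>v\<in>K. Hc *v v \<in> K))"
  proof
    assume "\<exists>K. csubspace K \<and> K \<noteq> {0} \<and> K \<subseteq> H0 coord Nb (proj \<Psi>)
              \<and> K \<noteq> cspan1 \<Psi> \<and> (\<forall>v\<in>K. Hc *v v \<in> K)"
    then obtain K where K: "csubspace K" "K \<noteq> {0}" "K \<subseteq> H0 coord Nb (proj \<Psi>)"
      "K \<noteq> cspan1 \<Psi>" "\<forall>v\<in>K. Hc *v v \<in> K" by blast
    have Dk: "\<forall>D\<in>set Ds. \<forall>v\<in>K. D *v v = 0"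
      using K(3) Ds_QL Ds_kill kill_H0[OF tensor] by blast
    have Ksm: "x \<in> K \<Longrightarrow> c *s x \<in> K" for x c using K(1) by (simp add: csubspace_def)
    have Kadd: "x \<in> K \<Longrightarrow> y \<in> K \<Longrightarrow> x + y \<in> K" for x y using K(1) by (simp add: csubspace_def)
    have K0: "0 \<in> K" using K(1) by (simp add: csubspace_def)
    show False
    proof (cases "\<Psi> \<in> K")
      case False
      obtain u where u: "u \<in> K" "u \<noteq> 0" using K(2) K0 by blast
      show False
        by (rule core[OF K(1) K(5) Dk Ksm[OF u(1)] normalize_unit[OF u(2)] unit False gas])
    next
      case True
      have "cspan1 \<Psi> \<subseteq> K" using True Ksm by (auto simp: cspan1_def)
      then obtain u where u: "u \<in> K" "u \<notin> cspan1 \<Psi>" using K(4) by blast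
      define w where "w = u - ip \<Psi> u *s \<Psi>"
      have wK: "w \<in> K" unfolding w_def by (rule csub_diff[OF K(1) u(1) Ksm[OF True]])
      have w0: "w \<noteq> 0"
      proof
        assume "w = 0"
        hence "u = ip \<Psi> u *s \<Psi>" by (simp add: w_def)
        thus False using u(2) by (auto simp: cspan1_def)
      qed
      have ipw: "ip \<Psi> w = 0" by (simp add: w_def ip_diff ip_smult unit_ip[OF unit])
      define K' where "K' = {v \<in> K. ip \<Psi> v = 0}"
      have K': "csubspace K'"
        unfolding csubspace_def K'_def using K0 Kadd Ksm by (simp add: ip_0 ip_add ip_smult)
      have Hinv: "\<forall>v\<in>K'. Hc *v v \<in> K'"
      proof
        fix v assume v: "v \<in> K'"
        have "ip \<Psi> (Hc *v v) = ip (Hc *v \<Psi>) v" by (rule ip_herm[OF herm])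
        also have "\<dots> = 0" using v by (simp add: Hc_eig ip_smult_l K'_def)
        finally show "Hc *v v \<in> K'" using v K(5) by (simp add: K'_def)
      qed
      have Dk': "\<forall>D\<in>set Ds. \<forall>v\<in>K'. D *v v = 0" using Dk by (simp add: K'_def)
      have phiK: "(of_real (1 / norm w) :: complex) *s w \<in> K'"
        using wK ipw Ksm by (simp add: K'_def ip_smult)
      have PsiK: "\<Psi> \<notin> K'" by (simp add: K'_def unit_ip[OF unit])
      show False
        by (rule core[OF K' Hinv Dk' phiK normalize_unit[OF w0] unit PsiK gas])
    qed
  qed
  show "let Hc' = Hc - cmscale (of_real h) (mat 1) in
         QL_ham coord Nb Hc' \<and> Hc' *v \<Psi> = 0 \<and> GAS (lindblad Hc' Ds) (proj \<Psi>)"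
    unfolding Let_def
  proof (intro conjI)
    define E where "E = cmscale (- of_real h) (mat 1 :: complex^'c^'c)"
    have hE: "hermitian E" by (simp add: E_def hermitian_def mat_adj_def cmscale_def mat_def vec_eq_iff)
    have qE: "QL_op coord Nb E" unfolding QL_op_def E_def using ident_local[OF tensor] by blast
    have eq: "Hc - cmscale (of_real h) (mat 1) = sum_list (Hs @ [E])"
      by (simp add: Hs(2) E_def vec_eq_iff cmscale_def)
    show "QL_ham coord Nb (Hc - cmscale (of_real h) (mat 1))"
      unfolding QL_ham_def eq using Hs(1) hE qE by (intro exI[of _ "Hs @ [E]"]) auto
    show "(Hc - cmscale (of_real h) (mat 1)) *v \<Psi> = 0"
      by (simp add: matrix_vector_mult_diff_rdistrib cms_mv Hc_eig)
    have "lindblad (Hc - cmscale (of_real h) (mat 1)) Ds = lindblad Hc Ds"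
      by (rule ext) (simp add: lindblad_def mm_diff_r mm_diff_l cms_mm_l cms_mm_r)
    thus "GAS (lindblad (Hc - cmscale (of_real h) (mat 1)) Ds) (proj \<Psi>)" using gas by simp
  qed
qed


end
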